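(* In the setting below, suppose the Borel sets $A_i$ exist as in the standing assumption and let $\pi(d\theta\mid a)$ be a Markov kernel satisfying the disintegration $\nu(d\theta)=\pi(d\theta\mid a)s(da)$. Define the Markov kernel $\tilde Q_0$ on $\mathcal{B}_1\times\mathcal{X}$ by $\tilde Q_0(A\mid x)=Q(t^{-1}(A)\mid x)$. Then $\tilde Q_0$ is a version of the formal posterior for the model $\tilde P$ and prior $s$, i.e. $\tilde P(dx\mid a)s(da)=\tilde Q_0(da\mid x)M(dx)$ as joint measures on $\mathcal{X}\times[0,\infty)$.
   Context: $(\mathcal{X},\mathcal{B})$ and $(\Theta,\mathcal{C})$ are Polish spaces with Borel $\sigma$-algebras; $\{P(\cdot\mid\theta)\}$ is a Markov kernel on $\mathcal{B}\times\Theta$; $\nu$ is a $\sigma$-finite measure on $\Theta$; the marginal $M(B)=\int P(B\mid\theta)\nu(d\theta)$ is assumed $\sigma$-finite; $Q(d\theta\mid x)$ is a Markov kernel with $P(dx\mid\theta)\nu(d\theta)=Q(d\theta\mid x)M(dx)$ as joint measures. Let $t:\Theta\to[0,\infty)$ be measurable, $\mathcal{B}_1$ the Borel sets of $[0,\infty)$, and $s(A)=\nu(t^{-1}(A))$. Standing assumption: there are disjoint Borel sets $A_1,A_2,\dots$ with $\bigcup_i A_i=[0,\infty)$ and $0<\nu(t^{-1}(A_i))<\infty$ for each $i$. The disintegration $\nu(d\theta)=\pi(d\theta\mid a)s(da)$ means $\int_\Theta f_2(t(\theta))f_1(\theta)\nu(d\theta)=\int_0^\infty f_2(a)\left(\int_\Theta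 f_1(\theta)\pi(d\theta\mid a)\right)s(da)$ for all nonnegative measurable $f_1$ on $\Theta$ and $f_2$ on $[0,\infty)$. The new model is $\tilde P(dx\mid a)=\int_\Theta P(dx\mid\theta)\pi(d\theta\mid a)$. *)

theory Defs
  imports "HOL-Probability.Probability"
begin

definition halfline :: "real measure" where
  "halfline = restrict_space borel {0..}"

definition joint_prior :: "('a \<Rightarrow> 'b measure) \<Rightarrow> 'a measure \<Rightarrow> 'b measure \<Rightarrow> ('b \<times> 'a) measure" where
  "joint_prior K mu Nb = measure_of (space Nb \<times> space mu) (sets (Nb \<Otimes>\<^sub>M mu))
     (\<lambda>S. \<integral>\<^sup>+ a. emeasure (K a) {b \<in> space Nb. (b, a) \<in> S} \<partial>mu)"

definition joint_post :: "('b \<Rightarrow> 'a measure) \<Rightarrow> 'b measure \<Rightarrow> 'a measure \<Rightarrow> ('b \<times> 'a) measure" where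
  "joint_post Q M Na = measure_of (space M \<times> space Na) (sets (M \<Otimes>\<^sub>M Na))
     (\<lambda>S. \<integral>\<^sup>+ x. emeasure (Q x) {a \<in> space Na. (x, a) \<in> S} \<partial>M)"

definition marginal :: "('t \<Rightarrow> 'x::topological_space measure) \<Rightarrow> 't measure \<Rightarrow> 'x measure" where
  "marginal P nu = measure_of UNIV (sets borel) (\<lambda>B. \<integral>\<^sup>+ \<theta>. emeasure (P \<theta>) B \<partial>nu)"

definition mix_kernel :: "('t \<Rightarrow> 'x::topological_space measure) \<Rightarrow> ('a \<Rightarrow> 't measure) \<Rightarrow> 'a \<Rightarrow> 'x measure" where
  "mix_kernel P K a = measure_of UNIV (sets borel) (\<lambda>B. \<integral>\<^sup>+ \<theta>. emeasure (P \<theta>) B \<partial>(K a))"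

end

theory Submission imports Defs begin

lemma emeasure_joint_prior:
  assumes K: "K \<in> measurable mu (subprob_algebra Nb)" and ne: "space mu \<noteq> {}"
    and S: "S \<in> sets (Nb \<Otimes>\<^sub>M mu)"
  shows "emeasure (joint_prior K mu Nb) S = (\<integral>\<^sup>+a. emeasure (K a) {b \<in> space Nb. (b,a) \<in> S} \<partial>mu)"
proof -
  define F where "F a = distr (K a) (Nb \<Otimes>\<^sub>M mu) (\<lambda>b. (b,a))" for a
  have F: "F \<in> measurable mu (subprob_algebra (Nb \<Otimes>\<^sub>M mu))" unfolding F_def
    by (rule measurable_distr2[OF _ K]) measurable
  have eqF: "emeasure (F a) S' = emeasure (K a) {b\<in>space Nb. (b,a)\<in>S'}"
    if a: "a \<in> space mu" and S': "S' \<in> sets (Nb \<Otimes>\<^sub>M mu)" for a S'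
  proof -
    have sK: "sets (K a) = sets Nb" using sets_kernel[OF K a] .
    have m: "(\<lambda>b. (b,a)) \<in> measurable (K a) (Nb \<Otimes>\<^sub>M mu)"
      unfolding measurable_cong_sets[OF sK refl] using a by measurable
    show ?thesis unfolding F_def using emeasure_distr[OF m S'] sets_eq_imp_space_eq[OF sK]
      by (auto intro: arg_cong2[where f=emeasure])
  qed
  have sF: "\<And>a. a \<in> space mu \<Longrightarrow> sets (F a) = sets (Nb \<Otimes>\<^sub>M mu)"
    using sets_kernel[OF F] .
  have "joint_prior K mu Nb = mu \<bind> F"
  proof -
    have "mu \<bind> F = measure_of (space (mu \<bind> F)) (sets (mu \<bind> F)) (emeasure (mu \<bind> F))"
      by (simp add: measure_of_of_measure)
    also have "\<dots> = measure_of (space Nb \<times> space mu) (sets (Nb \<Otimes>\<^sub>M mu)) (emeasure (mu \<bind> F))"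
      using sF ne by (simp add: space_pair_measure)
    also have "\<dots> = joint_prior K mu Nb" unfolding joint_prior_def
    proof (rule measure_of_eq)
      show "sets (Nb \<Otimes>\<^sub>M mu) \<subseteq> Pow (space Nb \<times> space mu)"
        using sets.space_closed[of "Nb \<Otimes>\<^sub>M mu"] by (simp add: space_pair_measure)
      fix S' assume "S' \<in> sigma_sets (space Nb \<times> space mu) (sets (Nb \<Otimes>\<^sub>M mu))"
      then have S': "S' \<in> sets (Nb \<Otimes>\<^sub>M mu)"
        using sets.sigma_sets_eq[of "Nb \<Otimes>\<^sub>M mu"] by (simp add: space_pair_measure)
      show "emeasure (mu \<bind> F) S' = (\<integral>\<^sup>+ a. emeasure (K a) {b \<in> space Nb. (b, a) \<in> S'} \<partial>mu)"
        using emeasure_bind[OF ne F S'] eqF[OF _ S'] by (simp cong: nn_integral_cong)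
    qed
    finally show ?thesis by simp
  qed
  then show ?thesis using emeasure_bind[OF ne F S] eqF[OF _ S] by (simp cong: nn_integral_cong)
qed

lemma emeasure_joint_post:
  assumes K: "K \<in> measurable mu (subprob_algebra Na)" and ne: "space mu \<noteq> {}"
    and S: "S \<in> sets (mu \<Otimes>\<^sub>M Na)"
  shows "emeasure (joint_post K mu Na) S = (\<integral>\<^sup>+x. emeasure (K x) {a \<in> space Na. (x,a) \<in> S} \<partial>mu)"
proof -
  define F where "F x = distr (K x) (mu \<Otimes>\<^sub>M Na) (\<lambda>a. (x,a))" for x
  have F: "F \<in> measurable mu (subprob_algebra (mu \<Otimes>\<^sub>M Na))" unfolding F_def
    by (rule measurable_distr2[OF _ K]) measurable
  have eqF: "emeasure (F a) S' = emeasure (K a) {b\<in>space Na. (a,b)\<in>S'}"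
    if a: "a \<in> space mu" and S': "S' \<in> sets (mu \<Otimes>\<^sub>M Na)" for a S'
  proof -
    have sK: "sets (K a) = sets Na" using sets_kernel[OF K a] .
    have m: "(\<lambda>b. (a,b)) \<in> measurable (K a) (mu \<Otimes>\<^sub>M Na)"
      unfolding measurable_cong_sets[OF sK refl] using a by measurable
    show ?thesis unfolding F_def using emeasure_distr[OF m S'] sets_eq_imp_space_eq[OF sK]
      by (auto intro: arg_cong2[where f=emeasure])
  qed
  have sF: "\<And>a. a \<in> space mu \<Longrightarrow> sets (F a) = sets (mu \<Otimes>\<^sub>M Na)"
    using sets_kernel[OF F] .
  have "joint_post K mu Na = mu \<bind> F"
  proof -
    have "mu \<bind> F = measure_of (space (mu \<bind> F)) (sets (mu \<bind> F)) (emeasure (mu \<bind> F))"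
      by (simp add: measure_of_of_measure)
    also have "\<dots> = measure_of (space mu \<times> space Na) (sets (mu \<Otimes>\<^sub>M Na)) (emeasure (mu \<bind> F))"
      using sF ne by (simp add: space_pair_measure)
    also have "\<dots> = joint_post K mu Na" unfolding joint_post_def
    proof (rule measure_of_eq)
      show "sets (mu \<Otimes>\<^sub>M Na) \<subseteq> Pow (space mu \<times> space Na)"
        using sets.space_closed[of "mu \<Otimes>\<^sub>M Na"] by (simp add: space_pair_measure)
      fix S' assume "S' \<in> sigma_sets (space mu \<times> space Na) (sets (mu \<Otimes>\<^sub>M Na))"
      then have S': "S' \<in> sets (mu \<Otimes>\<^sub>M Na)"
        using sets.sigma_sets_eq[of "mu \<Otimes>\<^sub>M Na"] by (simp add: space_pair_measure)
      show "emeasure (mu \<bind> F) S' = (\<integral>\<^sup>+ a. emeasure (K a) {b \<in> space Na. (a, b) \<in> S'} \<partial>mu)"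
        using emeasure_bind[OF ne F S'] eqF[OF _ S'] by (simp cong: nn_integral_cong)
    qed
    finally show ?thesis by simp
  qed
  then show ?thesis using emeasure_bind[OF ne F S] eqF[OF _ S] by (simp cong: nn_integral_cong)
qed


theorem theorem3p2:
  fixes P :: "'t::polish_space \<Rightarrow> 'x::polish_space measure"
    and nu :: "'t measure"
    and Q :: "'x \<Rightarrow> 't measure"
    and t :: "'t \<Rightarrow> real"
    and \<pi> :: "real \<Rightarrow> 't measure"
  assumes P_kernel: "P \<in> measurable borel (prob_algebra borel)"
    and nu_sets: "sets nu = sets borel"
    and nu_sf: "sigma_finite_measure nu"
    and M_sf: "sigma_finite_measure (marginal P nu)"
    and Q_kernel: "Q \<in> measurable borel (prob_algebra borel)"
    and Q_post: "joint_prior P nu borel = joint_post Q (marginal P nu) borel"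
    and t_meas: "t \<in> borel_measurable borel"
    and t_nonneg: "\<And>\<theta>. 0 \<le> t \<theta>"
    and partition: "\<exists>A :: nat \<Rightarrow> real set. disjoint_family A \<and> (\<forall>i. A i \<in> sets borel)
                     \<and> (\<Union>i. A i) = {0..}
                     \<and> (\<forall>i. 0 < emeasure nu (t -` A i \<inter> space nu)
                           \<and> emeasure nu (t -` A i \<inter> space nu) < \<infinity>)"
    and pi_kernel: "\<pi> \<in> measurable halfline (prob_algebra borel)"
    and disint: "\<And>f1 f2. f1 \<in> borel_measurable borel \<Longrightarrow> f2 \<in> borel_measurable halfline \<Longrightarrow>
        (\<integral>\<^sup>+ \<theta>. f2 (t \<theta>) * f1 \<theta> \<partial>nu)
          = (\<integral>\<^sup>+ a. f2 a * (\<integral>\<^sup>+ \<theta>. f1 \<theta> \<partial>(\<pi> a)) \<partial>(distr nu halfline t))"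
  shows "joint_prior (mix_kernel P \<pi>) (distr nu halfline t) borel
           = joint_post (\<lambda>x. distr (Q x) halfline t) (marginal P nu) halfline"
proof -
  obtain A :: "nat \<Rightarrow> real set" where Ab: "\<And>i. A i \<in> sets borel" and AU: "(\<Union>i. A i) = {0..}"
    and Afin: "\<And>i. emeasure nu (t -` A i \<inter> space nu) < \<infinity>"
    using partition by blast
  define s where "s = distr nu halfline t"
  define M where "M = marginal P nu"
  have sp_h: "space halfline = {0..}" unfolding halfline_def by (simp add: space_restrict_space)
  have sets_h: "C \<in> sets halfline \<longleftrightarrow> C \<subseteq> {0..} \<and> C \<in> sets borel" for C
    unfolding halfline_def by (subst sets_restrict_space_iff) auto
  have sp_nu: "space nu = UNIV" using sets_eq_imp_space_eq[OF nu_sets] by simp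
  have tm: "t \<in> measurable nu halfline"
    unfolding halfline_def measurable_cong_sets[OF nu_sets refl]
    by (rule measurable_restrict_space2) (auto simp: t_nonneg t_meas)
  have tm': "t \<in> measurable borel halfline"
    using tm unfolding measurable_cong_sets[OF nu_sets refl] .
  have sets_s: "sets s = sets halfline" and sp_s: "space s = {0..}"
    unfolding s_def using sp_h by auto
  have sets_M: "sets M = sets borel" and sp_M: "space M = UNIV"
    unfolding M_def marginal_def using sets.sigma_sets_eq[of borel]
    by (simp_all add: sets_measure_of_conv del: sets.sigma_sets_eq)
  have PK: "P \<in> measurable nu (subprob_algebra borel)"
    using measurable_prob_algebraD[OF P_kernel] unfolding measurable_cong_sets[OF nu_sets refl] .
  have PKb: "P \<in> measurable borel (subprob_algebra borel)"
    using measurable_prob_algebraD[OF P_kernel] .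
  have piK: "\<pi> \<in> measurable halfline (subprob_algebra borel)"
    using measurable_prob_algebraD[OF pi_kernel] .
  have sets_pi: "a \<in> space halfline \<Longrightarrow> sets (\<pi> a) = sets borel" for a
    using sets_kernel[OF piK] .
  have mixeq: "mix_kernel P \<pi> a = \<pi> a \<bind> P" if a: "a \<in> space halfline" for a
  proof -
    have ne: "space (\<pi> a) \<noteq> {}" using sets_eq_imp_space_eq[OF sets_pi[OF a]] by simp
    have PKa: "P \<in> measurable (\<pi> a) (subprob_algebra borel)"
      using PKb unfolding measurable_cong_sets[OF sets_pi[OF a] refl] .
    have sb: "sets (\<pi> a \<bind> P) = sets borel" using sets_bind[OF sets_kernel[OF PKa] ne] .
    have "\<pi> a \<bind> P = measure_of (space (\<pi> a \<bind> P)) (sets (\<pi> a \<bind> P)) (emeasure (\<pi> a \<bind> P))"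
      by (simp add: measure_of_of_measure)
    also have "\<dots> = measure_of UNIV (sets borel) (emeasure (\<pi> a \<bind> P))"
      using sb sets_eq_imp_space_eq[OF sb] by simp
    also have "\<dots> = mix_kernel P \<pi> a" unfolding mix_kernel_def
    proof (rule measure_of_eq)
      fix B :: "'x set" assume "B \<in> sigma_sets UNIV (sets borel)"
      then have B: "B \<in> sets borel" by (metis space_borel sets.sigma_sets_eq)
      show "emeasure (\<pi> a \<bind> P) B = (\<integral>\<^sup>+ \<theta>. emeasure (P \<theta>) B \<partial>\<pi> a)"
        using emeasure_bind[OF ne PKa B] .
    qed auto
    finally show ?thesis by simp
  qed
  have mixK: "mix_kernel P \<pi> \<in> measurable s (subprob_algebra borel)"
  proof -
    have "(\<lambda>a. \<pi> a \<bind> P) \<in> measurable halfline (subprob_algebra borel)"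
      by (rule measurable_bind2[OF piK PKb])
    then have "mix_kernel P \<pi> \<in> measurable halfline (subprob_algebra borel)"
      by (subst measurable_cong[OF mixeq]) auto
    then show ?thesis unfolding measurable_cong_sets[OF sets_s refl] .
  qed
  have QK: "Q \<in> measurable M (subprob_algebra borel)"
    using measurable_prob_algebraD[OF Q_kernel] unfolding measurable_cong_sets[OF sets_M refl] .
  have QK': "(\<lambda>x. distr (Q x) halfline t) \<in> measurable M (subprob_algebra halfline)"
    by (rule measurable_compose[OF QK measurable_distr[OF tm']])
  have neS: "space s \<noteq> {}" using sp_s by auto
  have neM: "space M \<noteq> {}" using sp_M by auto
  have rect: "emeasure (joint_prior (mix_kernel P \<pi>) s borel) (B \<times> C)
      = emeasure (joint_post (\<lambda>x. distr (Q x) halfline t) M halfline) (B \<times> C)"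
    if B: "B \<in> sets borel" and C: "C \<in> sets halfline" for B C
  proof -
    have Cs: "C \<subseteq> {0..}" "C \<in> sets borel" using C sets_h by auto
    have tC: "t -` C \<in> sets borel" using measurable_sets[OF tm' C] by simp
    have "emeasure (joint_prior (mix_kernel P \<pi>) s borel) (B \<times> C)
        = (\<integral>\<^sup>+a. emeasure (mix_kernel P \<pi> a) {x\<in>space borel. (x,a) \<in> B \<times> C} \<partial>s)"
      by (rule emeasure_joint_prior[OF mixK neS]) (use B C sets_s in auto)
    also have "\<dots> = (\<integral>\<^sup>+a. indicator C a * (\<integral>\<^sup>+\<theta>. emeasure (P \<theta>) B \<partial>\<pi> a) \<partial>s)"
    proof (rule nn_integral_cong)
      fix a assume a: "a \<in> space s"
      then have ah: "a \<in> space halfline" using sp_s sp_h by simp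
      have ne: "space (\<pi> a) \<noteq> {}" using sets_eq_imp_space_eq[OF sets_pi[OF ah]] by simp
      have PKa: "P \<in> measurable (\<pi> a) (subprob_algebra borel)"
        using PKb unfolding measurable_cong_sets[OF sets_pi[OF ah] refl] .
      show "emeasure (mix_kernel P \<pi> a) {x\<in>space borel. (x,a) \<in> B \<times> C}
          = indicator C a * (\<integral>\<^sup>+\<theta>. emeasure (P \<theta>) B \<partial>\<pi> a)"
        using emeasure_bind[OF ne PKa B] by (cases "a \<in> C") (auto simp: mixeq[OF ah])
    qed
    also have "\<dots> = (\<integral>\<^sup>+\<theta>. indicator C (t \<theta>) * emeasure (P \<theta>) B \<partial>nu)"
      unfolding s_def
      by (rule disint[symmetric]) (use B C PKb in auto)
    finally have L: "emeasure (joint_prior (mix_kernel P \<pi>) s borel) (B \<times> C)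
        = (\<integral>\<^sup>+\<theta>. indicator C (t \<theta>) * emeasure (P \<theta>) B \<partial>nu)" .
    have "emeasure (joint_post (\<lambda>x. distr (Q x) halfline t) M halfline) (B \<times> C)
        = (\<integral>\<^sup>+x. emeasure (distr (Q x) halfline t) {a\<in>space halfline. (x,a) \<in> B \<times> C} \<partial>M)"
      by (rule emeasure_joint_post[OF QK' neM]) (use B C sets_M in auto)
    also have "\<dots> = (\<integral>\<^sup>+x. emeasure (Q x) {\<theta>\<in>space borel. (x,\<theta>) \<in> B \<times> t -` C} \<partial>M)"
    proof (rule nn_integral_cong)
      fix x assume x: "x \<in> space M"
      have sQ: "sets (Q x) = sets borel" using sets_kernel[OF QK x] .
      have tmx: "t \<in> measurable (Q x) halfline"
        using tm' unfolding measurable_cong_sets[OF sQ refl] .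
      have spQ: "space (Q x) = UNIV" using sets_eq_imp_space_eq[OF sQ] by simp
      have "{a\<in>space halfline. (x,a) \<in> B \<times> C} \<in> sets halfline"
        using C by (cases "x \<in> B") auto
      then show "emeasure (distr (Q x) halfline t) {a\<in>space halfline. (x,a) \<in> B \<times> C}
          = emeasure (Q x) {\<theta>\<in>space borel. (x,\<theta>) \<in> B \<times> t -` C}"
        using Cs sp_h spQ by (subst emeasure_distr[OF tmx]) (auto intro!: arg_cong2[where f=emeasure])
    qed
    also have "\<dots> = emeasure (joint_post Q M borel) (B \<times> t -` C)"
      by (rule emeasure_joint_post[OF QK neM, symmetric]) (use B tC sets_M in auto)
    also have "\<dots> = emeasure (joint_prior P nu borel) (B \<times> t -` C)"
      using Q_post M_def by simp
    also have "\<dots> = (\<integral>\<^sup>+\<theta>. emeasure (P \<theta>) {x\<in>space borel. (x,\<theta>) \<in> B \<times> t -` C} \<partial>nu)"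
      by (rule emeasure_joint_prior[OF PK]) (use B tC nu_sets sp_nu in auto)
    also have "\<dots> = (\<integral>\<^sup>+\<theta>. indicator C (t \<theta>) * emeasure (P \<theta>) B \<partial>nu)"
      by (rule nn_integral_cong) (auto simp: indicator_def)
    finally show ?thesis using L by simp
  qed
  have rectL: "emeasure (joint_prior (mix_kernel P \<pi>) s borel) (B \<times> C)
      = (\<integral>\<^sup>+\<theta>. indicator C (t \<theta>) * emeasure (P \<theta>) B \<partial>nu)"
    if B: "B \<in> sets borel" and C: "C \<in> sets halfline" for B C
  proof -
    have Cs: "C \<subseteq> {0..}" "C \<in> sets borel" using C sets_h by auto
    have tC: "t -` C \<in> sets borel" using measurable_sets[OF tm' C] by simp
    have "emeasure (joint_prior (mix_kernel P \<pi>) s borel) (B \<times> C)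
        = (\<integral>\<^sup>+a. emeasure (mix_kernel P \<pi> a) {x\<in>space borel. (x,a) \<in> B \<times> C} \<partial>s)"
      by (rule emeasure_joint_prior[OF mixK neS]) (use B C sets_s in auto)
    also have "\<dots> = (\<integral>\<^sup>+a. indicator C a * (\<integral>\<^sup>+\<theta>. emeasure (P \<theta>) B \<partial>\<pi> a) \<partial>s)"
    proof (rule nn_integral_cong)
      fix a assume a: "a \<in> space s"
      then have ah: "a \<in> space halfline" using sp_s sp_h by simp
      have ne: "space (\<pi> a) \<noteq> {}" using sets_eq_imp_space_eq[OF sets_pi[OF ah]] by simp
      have PKa: "P \<in> measurable (\<pi> a) (subprob_algebra borel)"
        using PKb unfolding measurable_cong_sets[OF sets_pi[OF ah] refl] .
      show "emeasure (mix_kernel P \<pi> a) {x\<in>space borel. (x,a) \<in> B \<times> C}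
          = indicator C a * (\<integral>\<^sup>+\<theta>. emeasure (P \<theta>) B \<partial>\<pi> a)"
        using emeasure_bind[OF ne PKa B] by (cases "a \<in> C") (auto simp: mixeq[OF ah])
    qed
    also have "\<dots> = (\<integral>\<^sup>+\<theta>. indicator C (t \<theta>) * emeasure (P \<theta>) B \<partial>nu)"
      unfolding s_def
      by (rule disint[symmetric]) (use B C PKb in auto)
    finally show ?thesis .
  qed
  have sets_jp: "sets (joint_prior K mu Nb) = sets (Nb \<Otimes>\<^sub>M mu)" for K mu and Nb :: "'b measure"
    unfolding joint_prior_def using sets.space_closed[of "Nb \<Otimes>\<^sub>M mu"]
      sets.sigma_sets_eq[of "Nb \<Otimes>\<^sub>M mu"]
    by (simp add: space_pair_measure del: sets.sigma_sets_eq)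
  have sets_jq: "sets (joint_post K mu Na) = sets (mu \<Otimes>\<^sub>M Na)" for K mu and Na :: "'b measure"
    unfolding joint_post_def using sets.space_closed[of "mu \<Otimes>\<^sub>M Na"]
      sets.sigma_sets_eq[of "mu \<Otimes>\<^sub>M Na"]
    by (simp add: space_pair_measure del: sets.sigma_sets_eq)
  have sbh: "sets (borel \<Otimes>\<^sub>M halfline) = sigma_sets (UNIV \<times> {0..})
      {b \<times> c | b c. b \<in> sets (borel :: 'x measure) \<and> c \<in> sets halfline}"
    using sets_pair_measure[of "borel :: 'x measure" halfline] sp_h by simp
  have Ai: "A i \<subseteq> {0..}" for i using AU by blast
  have fin: "emeasure (joint_prior (mix_kernel P \<pi>) s borel) (UNIV \<times> A i) \<noteq> \<infinity>" for i
  proof -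
    have Ah: "A i \<in> sets halfline" using Ai Ab sets_h by auto
    have "(\<integral>\<^sup>+\<theta>. indicator (A i) (t \<theta>) * emeasure (P \<theta>) UNIV \<partial>nu)
        \<le> (\<integral>\<^sup>+\<theta>. indicator (t -` A i \<inter> space nu) \<theta> \<partial>nu)"
    proof (rule nn_integral_mono)
      fix \<theta> assume "\<theta> \<in> space nu"
      have "P \<theta> \<in> space (subprob_algebra borel)" using measurable_space[OF PKb] by simp
      then have "subprob_space (P \<theta>)" by (simp add: space_subprob_algebra)
      then have "emeasure (P \<theta>) UNIV \<le> 1" by (rule subprob_space.subprob_emeasure_le_1)
      then show "indicator (A i) (t \<theta>) * emeasure (P \<theta>) UNIV \<le> indicator (t -` A i \<inter> space nu) \<theta>"
        by (auto simp: indicator_def sp_nu)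
    qed
    also have "\<dots> = emeasure nu (t -` A i \<inter> space nu)"
      by (rule nn_integral_indicator) (use measurable_sets[OF tm Ah] in simp)
    finally show ?thesis using rectL[OF _ Ah] Afin[of i] by (auto simp: top_unique)
  qed
  show ?thesis unfolding s_def[symmetric] M_def[symmetric]
  proof (rule measure_eqI_generator_eq[where E="{b \<times> c | b c. b \<in> sets borel \<and> c \<in> sets halfline}"
        and \<Omega>="UNIV \<times> {0..}" and A="\<lambda>i. UNIV \<times> A i"])
    show "Int_stable {b \<times> c | b c. b \<in> sets (borel :: 'x measure) \<and> c \<in> sets halfline}"
      by (rule Int_stable_pair_measure_generator)
    show "{b \<times> c | b c. b \<in> sets (borel :: 'x measure) \<and> c \<in> sets halfline} \<subseteq> Pow (UNIV \<times> {0..})"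
      using sets_h by auto
    show "sets (joint_prior (mix_kernel P \<pi>) s borel) = sigma_sets (UNIV \<times> {0..})
      {b \<times> c | b c. b \<in> sets (borel :: 'x measure) \<and> c \<in> sets halfline}"
      unfolding sets_jp sets_pair_measure_cong[OF refl sets_s] sbh ..
    show "sets (joint_post (\<lambda>x. distr (Q x) halfline t) M halfline) = sigma_sets (UNIV \<times> {0..})
      {b \<times> c | b c. b \<in> sets (borel :: 'x measure) \<and> c \<in> sets halfline}"
      unfolding sets_jq sets_pair_measure_cong[OF sets_M refl] sbh ..
    show "range (\<lambda>i. UNIV \<times> A i) \<subseteq> {b \<times> c | b c. b \<in> sets (borel :: 'x measure) \<and> c \<in> sets halfline}"
    proof (rule image_subsetI)
      fix i
      have "A i \<in> sets halfline" using Ai Ab sets_h by auto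
      then show "UNIV \<times> A i \<in> {b \<times> c | b c. b \<in> sets (borel :: 'x measure) \<and> c \<in> sets halfline}"
        by force
    qed
    show "(\<Union>i. UNIV \<times> A i) = (UNIV :: 'x set) \<times> {0..}" using AU by blast
  next
    fix X assume "X \<in> {b \<times> c | b c. b \<in> sets (borel :: 'x measure) \<and> c \<in> sets halfline}"
    then obtain b c where X: "X = b \<times> c" and b: "b \<in> sets borel" and c: "c \<in> sets halfline" by blast
    show "emeasure (joint_prior (mix_kernel P \<pi>) s borel) X
        = emeasure (joint_post (\<lambda>x. distr (Q x) halfline t) M halfline) X"
      unfolding X by (rule rect[OF b c])
  next
    fix i show "emeasure (joint_prior (mix_kernel P \<pi>) s borel) (UNIV \<times> A i) \<noteq> \<infinity>"
      by (rule fin)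
  qed
qed

end
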